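(* Let $n\ge 4$ and $1\le s_1<s_2\le n-1$ be integers with $s_1+s_2\le n$, let $\{t_1<\cdots<t_{n-3}\}=[n-1]\setminus\{s_1,s_2\}$, and let $G=G_n\langle t_1,\ldots,t_{n-3}\rangle$. Then $G$ is perfect if and only if $(s_1+s_2)/\gcd(s_1,s_2)$ is even or $(s_1+s_2)/\gcd(s_1,s_2)=3$.
   Context: For integers $n\ge 2$, $k\ge 1$ and $1\le t_1<t_2<\cdots<t_k\le n-1$, the Toeplitz graph $G_n\langle t_1,\ldots,t_k\rangle$ is the simple graph with vertex set $[n]=\{1,\ldots,n\}$ in which two distinct vertices $i,j$ are adjacent if and only if $|i-j|\in\{t_1,\ldots,t_k\}$. A graph $G$ is perfect if $\omega(H)=\chi(H)$ for every induced subgraph $H$ of $G$ (clique number equals chromatic number). *)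

theory Defs
  imports Main
begin

definition toeplitz_adj :: "nat \<Rightarrow> nat set \<Rightarrow> nat \<Rightarrow> nat \<Rightarrow> bool" where
  "toeplitz_adj n T i j \<longleftrightarrow> i \<in> {1..n} \<and> j \<in> {1..n} \<and> i \<noteq> j \<and>
     (if i \<le> j then j - i else i - j) \<in> T"

definition is_clique :: "('a \<Rightarrow> 'a \<Rightarrow> bool) \<Rightarrow> 'a set \<Rightarrow> 'a set \<Rightarrow> bool" where
  "is_clique E S C \<longleftrightarrow> C \<subseteq> S \<and> (\<forall>x\<in>C. \<forall>y\<in>C. x \<noteq> y \<longrightarrow> E x y)"

definition clique_number :: "('a \<Rightarrow> 'a \<Rightarrow> bool) \<Rightarrow> 'a set \<Rightarrow> nat" where
  "clique_number E S = Max {card C | C. is_clique E S C}"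

definition colorable :: "('a \<Rightarrow> 'a \<Rightarrow> bool) \<Rightarrow> 'a set \<Rightarrow> nat \<Rightarrow> bool" where
  "colorable E S k \<longleftrightarrow> (\<exists>f :: 'a \<Rightarrow> nat. (\<forall>x\<in>S. f x < k) \<and>
      (\<forall>x\<in>S. \<forall>y\<in>S. E x y \<longrightarrow> f x \<noteq> f y))"

definition chromatic_number :: "('a \<Rightarrow> 'a \<Rightarrow> bool) \<Rightarrow> 'a set \<Rightarrow> nat" where
  "chromatic_number E S = (LEAST k. colorable E S k)"

definition perfect :: "('a \<Rightarrow> 'a \<Rightarrow> bool) \<Rightarrow> 'a set \<Rightarrow> bool" where
  "perfect E V \<longleftrightarrow> (\<forall>S \<subseteq> V. clique_number E S = chromatic_number E S)"

end

theory Submission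
  imports Defs
begin


lemma clique_le_colorable:
  assumes "is_clique E S C" "colorable E S k"
  shows "card C \<le> k"
proof -
  from assms(2) obtain f where f: "\<forall>x\<in>S. f x < k" "\<forall>x\<in>S. \<forall>y\<in>S. E x y \<longrightarrow> f x \<noteq> f y"
    unfolding colorable_def by blast
  have CS: "C \<subseteq> S" and cl: "\<forall>x\<in>C. \<forall>y\<in>C. x \<noteq> y \<longrightarrow> E x y" using assms(1) unfolding is_clique_def by auto
  have "inj_on f C" unfolding inj_on_def using f(2) cl CS by blast
  hence "card C = card (f ` C)" by (simp add: card_image)
  also have "\<dots> \<le> card {..<k}" apply (rule card_mono) using f(1) CS by auto
  finally show ?thesis by simp
qed

lemma colorable_of_map:
  assumes "finite S" "card (f ` S) \<le> k" "\<forall>x\<in>S. \<forall>y\<in>S. E x y \<longrightarrow> f x \<noteq> f y"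
  shows "colorable E S k"
proof -
  obtain h where h: "bij_betw h (f ` S) {0..<card (f ` S)}"
    using ex_bij_betw_finite_nat assms(1) by blast
  have "\<forall>x\<in>S. h (f x) < k" using h assms(2) bij_betwE by fastforce
  moreover have "\<forall>x\<in>S. \<forall>y\<in>S. E x y \<longrightarrow> h (f x) \<noteq> h (f y)"
    using assms(3) h unfolding bij_betw_def inj_on_def by blast
  ultimately show ?thesis unfolding colorable_def by (intro exI[of _ "h o f"]) auto
qed

lemma main_generic:
  fixes E H :: "'a \<Rightarrow> 'a \<Rightarrow> bool"
  assumes fin: "finite S"
    and EH: "\<And>x y. x\<in>S \<Longrightarrow> y\<in>S \<Longrightarrow> E x y \<longleftrightarrow> x \<noteq> y \<and> \<not> H x y"
    and I: "I \<subseteq> S" "\<And>x y. x\<in>I \<Longrightarrow> y\<in>I \<Longrightarrow> x\<noteq>y \<Longrightarrow> \<not> H x y"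
    and f: "card (f ` S) \<le> card I" "\<And>x y. x\<in>S \<Longrightarrow> y\<in>S \<Longrightarrow> x\<noteq>y \<Longrightarrow> f x = f y \<Longrightarrow> H x y"
  shows "clique_number E S = chromatic_number E S"
proof -
  have Icl: "is_clique E S I" unfolding is_clique_def
  proof (intro conjI ballI impI)
    fix x y assume "x \<in> I" "y \<in> I" "x \<noteq> y"
    thus "E x y" using I EH[of x y] by blast
  qed (use I in auto)
  have col: "colorable E S (card I)"
    apply (rule colorable_of_map[OF fin f(1)]) using EH f(2) by blast
  let ?Cs = "{card C | C. is_clique E S C}"
  have fCs: "finite ?Cs"
  proof (rule finite_subset)
    show "?Cs \<subseteq> {..card S}" using fin by (auto simp: is_clique_def intro: card_mono)
  qed auto
  have "card I \<in> ?Cs" using Icl by blast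
  hence a: "card I \<le> clique_number E S" unfolding clique_number_def using fCs Max_ge by blast
  have "clique_number E S \<in> ?Cs" unfolding clique_number_def
    using fCs \<open>card I \<in> ?Cs\<close> Max_in by blast
  then obtain C where C: "is_clique E S C" "clique_number E S = card C" by auto
  have chi: "chromatic_number E S \<le> card I" unfolding chromatic_number_def
    using col by (rule Least_le)
  have "colorable E S (chromatic_number E S)" unfolding chromatic_number_def
    using col by (rule LeastI)
  hence "clique_number E S \<le> chromatic_number E S" using C clique_le_colorable by metis
  thus ?thesis using a chi by linarith
qed



lemma hall:
  fixes A :: "'i \<Rightarrow> 'a set"
  assumes "finite I" "\<forall>i\<in>I. finite (A i)"
    "\<forall>J\<subseteq>I. card J \<le> card (\<Union>(A ` J))"
  shows "\<exists>r. inj_on r I \<and> (\<forall>i\<in>I. r i \<in> A i)"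
  using assms
proof (induction "card I" arbitrary: I A rule: less_induct)
  case less
  note fin = less.prems(1) and finA = less.prems(2) and H = less.prems(3)
  show ?case
  proof (cases "I = {}")
    case True then show ?thesis by auto
  next
    case Ine: False
    show ?thesis
    proof (cases "\<exists>J. J \<subseteq> I \<and> J \<noteq> {} \<and> J \<noteq> I \<and> card J = card (\<Union>(A ` J))")
      case True
      then obtain J where J: "J \<subseteq> I" "J \<noteq> {}" "J \<noteq> I" "card J = card (\<Union>(A ` J))" by blast
      have finJ: "finite J" using J fin finite_subset by auto
      have cJ: "card J < card I" using J fin by (meson psubsetI psubset_card_mono)
      obtain r1 where r1: "inj_on r1 J" "\<forall>i\<in>J. r1 i \<in> A i"
      proof -
        have "\<forall>i\<in>J. finite (A i)" using finA J by auto
        moreover have "\<forall>K\<subseteq>J. card K \<le> card (\<Union>(A ` K))" using H J by auto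
        ultimately show ?thesis using less.hyps[OF cJ finJ, of A] that by blast
      qed
      define U where "U = \<Union>(A ` J)"
      have finU: "finite U" unfolding U_def using finJ finA J by auto
      have cIJ: "card (I - J) < card I" using J fin
      proof -
        have "card J > 0" using finJ J(2) by (simp add: card_gt_0_iff)
        moreover have "card (I - J) = card I - card J" using card_Diff_subset[OF finJ J(1)] .
        moreover have "card J \<le> card I" using card_mono[OF fin J(1)] .
        ultimately show ?thesis by linarith
      qed
      have H2: "\<forall>K\<subseteq>I - J. card K \<le> card (\<Union>((\<lambda>i. A i - U) ` K))"
      proof (intro allI impI)
        fix K assume K: "K \<subseteq> I - J"
        have finK: "finite K" using K fin finite_subset by blast
        have eq: "\<Union>(A ` (K \<union> J)) = \<Union>((\<lambda>i. A i - U) ` K) \<union> U" unfolding U_def by auto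
        have disj: "\<Union>((\<lambda>i. A i - U) ` K) \<inter> U = {}" by auto
        have finKU: "finite (\<Union>((\<lambda>i. A i - U) ` K))" using finK finA K by auto
        have "card (K \<union> J) \<le> card (\<Union>(A ` (K \<union> J)))" proof -
          have "K \<union> J \<subseteq> I" using K J by auto
          thus ?thesis using H by blast
        qed
        also have "\<dots> = card (\<Union>((\<lambda>i. A i - U) ` K)) + card U"
          using eq disj finKU finU card_Un_disjoint by metis
        finally have "card (K \<union> J) \<le> card (\<Union>((\<lambda>i. A i - U) ` K)) + card U" .
        moreover have "card (K \<union> J) = card K + card J" using K finK finJ
          by (metis Diff_disjoint card_Un_disjoint disjoint_iff subset_iff)
        moreover have "card U = card J" using J(4) U_def by simp
        ultimately show "card K \<le> card (\<Union>((\<lambda>i. A i - U) ` K))" by linarith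
      qed
      obtain r2 where r2: "inj_on r2 (I - J)" "\<forall>i\<in>I - J. r2 i \<in> A i - U"
        using less.hyps[OF cIJ, of "\<lambda>i. A i - U"] fin finA H2 by auto
      define r where "r = (\<lambda>i. if i \<in> J then r1 i else r2 i)"
      have "\<forall>i\<in>I. r i \<in> A i" using r1 r2 unfolding r_def by auto
      moreover have "inj_on r I"
      proof (rule inj_onI)
        fix x y assume xy: "x \<in> I" "y \<in> I" "r x = r y"
        have r1U: "\<forall>i\<in>J. r1 i \<in> U" using r1 unfolding U_def by auto
        show "x = y"
        proof (cases "x \<in> J"; cases "y \<in> J")
          assume "x \<in> J" "y \<in> J" thus ?thesis using xy r1(1) unfolding r_def inj_on_def by auto
        next
          assume "x \<notin> J" "y \<notin> J" thus ?thesis using xy r2(1) unfolding r_def inj_on_def by auto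
        next
          assume a: "x \<in> J" "y \<notin> J" thus ?thesis using xy r1U r2(2) unfolding r_def by force
        next
          assume a: "x \<notin> J" "y \<in> J" thus ?thesis using xy r1U r2(2) unfolding r_def by force
        qed
      qed
      ultimately show ?thesis by blast
    next
      case False
      obtain i0 where i0: "i0 \<in> I" using Ine by blast
      have "card {i0} \<le> card (A i0)" using H i0 by (metis cSup_singleton empty_subsetI image_empty image_insert insert_subset)
      then obtain x where x: "x \<in> A i0" by fastforce
      have cI: "card (I - {i0}) < card I" using i0 fin by (meson card_Diff1_less)
      have H2: "\<forall>K\<subseteq>I - {i0}. card K \<le> card (\<Union>((\<lambda>i. A i - {x}) ` K))"
      proof (intro allI impI)
        fix K assume K: "K \<subseteq> I - {i0}"
        show "card K \<le> card (\<Union>((\<lambda>i. A i - {x}) ` K))"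
        proof (cases "K = {}")
          case True then show ?thesis by simp
        next
          case Kne: False
          have "K \<noteq> I" using K i0 by auto
          hence lt: "card K < card (\<Union>(A ` K))" using False H K Kne
            by (metis Diff_subset le_neq_implies_less subset_trans)
          have eq: "\<Union>((\<lambda>i. A i - {x}) ` K) = \<Union>(A ` K) - {x}" by auto
          have "card (\<Union>(A ` K)) - 1 \<le> card (\<Union>(A ` K) - {x})" using diff_card_le_card_Diff[of "{x}" "\<Union>(A ` K)"] by simp
          then show ?thesis using lt unfolding eq by linarith
        qed
      qed
      obtain r2 where r2: "inj_on r2 (I - {i0})" "\<forall>i\<in>I - {i0}. r2 i \<in> A i - {x}"
        using less.hyps[OF cI, of "\<lambda>i. A i - {x}"] fin finA H2 by auto
      define r where "r = r2(i0 := x)"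
      have "\<forall>i\<in>I. r i \<in> A i" using r2 x unfolding r_def by auto
      moreover have "inj_on r I" using r2 unfolding r_def inj_on_def by auto
      ultimately show ?thesis by blast
    qed
  qed
qed



lemma hall_defect:
  fixes A :: "'i \<Rightarrow> 'a set" and d :: nat
  assumes fin: "finite I" and finA: "\<forall>i\<in>I. finite (A i)"
    and H: "\<forall>J\<subseteq>I. card J \<le> card (\<Union>(A ` J)) + d"
  shows "\<exists>J0 r. J0 \<subseteq> I \<and> card I \<le> card J0 + d \<and> inj_on r J0 \<and> (\<forall>i\<in>J0. r i \<in> A i)"
proof -
  define A' :: "'i \<Rightarrow> ('a + nat) set" where "A' i = Inl ` A i \<union> Inr ` {..<d}" for i
  have finA': "\<forall>i\<in>I. finite (A' i)" using finA unfolding A'_def by auto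
  have H': "\<forall>J\<subseteq>I. card J \<le> card (\<Union>(A' ` J))"
  proof (intro allI impI)
    fix J assume J: "J \<subseteq> I"
    show "card J \<le> card (\<Union>(A' ` J))"
    proof (cases "J = {}")
      case True thus ?thesis by simp
    next
      case False
      have eq: "\<Union>(A' ` J) = Inl ` (\<Union>(A ` J)) \<union> Inr ` {..<d}" unfolding A'_def using False by auto
      have finJ: "finite J" using J fin finite_subset by blast
      have fU: "finite (\<Union>(A ` J))" using finJ finA J by auto
      have "card (\<Union>(A' ` J)) = card (Inl ` (\<Union>(A ` J)) :: ('a + nat) set) + card (Inr ` {..<d} :: ('a + nat) set)"
        unfolding eq by (rule card_Un_disjoint) (use fU in auto)
      also have "\<dots> = card (\<Union>(A ` J)) + d" by (simp add: card_image)
      finally show ?thesis using H J by simp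
    qed
  qed
  obtain r' where r': "inj_on r' I" "\<forall>i\<in>I. r' i \<in> A' i" using hall[OF fin finA' H'] by blast
  define J0 where "J0 = {i\<in>I. r' i \<in> range Inl}"
  define r where "r i = (case r' i of Inl a \<Rightarrow> a | Inr _ \<Rightarrow> undefined)" for i
  have J0I: "J0 \<subseteq> I" unfolding J0_def by auto
  have rA: "\<forall>i\<in>J0. r i \<in> A i"
  proof
    fix i assume i: "i \<in> J0"
    then obtain a where a: "r' i = Inl a" unfolding J0_def by auto
    have "r' i \<in> A' i" using i r' J0I by auto
    thus "r i \<in> A i" using a unfolding r_def A'_def by auto
  qed
  have rinj: "inj_on r J0"
  proof (rule inj_onI)
    fix x y assume "x \<in> J0" "y \<in> J0" "r x = r y"
    moreover then obtain a b where "r' x = Inl a" "r' y = Inl b" unfolding J0_def by auto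
    ultimately have "r' x = r' y" unfolding r_def by auto
    thus "x = y" using r'(1) J0I \<open>x \<in> J0\<close> \<open>y \<in> J0\<close> unfolding inj_on_def by blast
  qed
  have "r' ` (I - J0) \<subseteq> Inr ` {..<d}"
  proof
    fix z assume "z \<in> r' ` (I - J0)"
    then obtain i where i: "i \<in> I" "i \<notin> J0" "z = r' i" by auto
    have "r' i \<in> A' i" using i r' by auto
    thus "z \<in> Inr ` {..<d}" using i unfolding A'_def J0_def by auto
  qed
  hence "card (r' ` (I - J0)) \<le> d"
    by (metis card_image card_lessThan card_mono finite_imageI finite_lessThan inj_Inr inj_on_subset subset_UNIV)
  moreover have "card (r' ` (I - J0)) = card (I - J0)"
    using r'(1) by (meson Diff_subset card_image inj_on_subset)
  moreover have "card I = card J0 + card (I - J0)" using J0I fin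
    by (metis card_Diff_subset card_mono finite_subset le_add_diff_inverse)
  ultimately show ?thesis using J0I rinj rA by (intro exI[of _ J0] exI[of _ r]) auto
qed

lemma bip_cover:
  fixes H :: "'a \<Rightarrow> 'a \<Rightarrow> bool" and c :: "'a \<Rightarrow> bool"
  assumes fin: "finite S" and bip: "\<And>x y. x\<in>S \<Longrightarrow> y\<in>S \<Longrightarrow> H x y \<Longrightarrow> c x \<noteq> c y"
    and sym: "\<And>x y. H x y \<Longrightarrow> H y x"
  shows "\<exists>I (f :: 'a \<Rightarrow> 'a). I \<subseteq> S \<and> (\<forall>x\<in>I. \<forall>y\<in>I. x\<noteq>y \<longrightarrow> \<not>H x y) \<and> card (f`S) \<le> card I
     \<and> (\<forall>x\<in>S. \<forall>y\<in>S. x\<noteq>y \<longrightarrow> f x = f y \<longrightarrow> H x y)"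
proof -
  define X where "X = {x\<in>S. c x}"
  define Y where "Y = {x\<in>S. \<not> c x}"
  define A where "A x = {y\<in>S. H x y}" for x
  define N where "N J = \<Union>(A ` J)" for J
  have finX: "finite X" and finY: "finite Y" using fin unfolding X_def Y_def by auto
  have NY: "N J \<subseteq> Y" if "J \<subseteq> X" for J using that bip unfolding N_def A_def X_def Y_def by fastforce
  have finN: "finite (N J)" if "J \<subseteq> X" for J using NY[OF that] finY finite_subset by blast
  define D where "D = (\<lambda>J. card J - card (N J)) ` Pow X"
  have finD: "finite D" unfolding D_def using finX by simp
  define d where "d = Max D"
  have dge: "card J \<le> card (N J) + d" if "J \<subseteq> X" for J
  proof -
    have "card J - card (N J) \<in> D" unfolding D_def using that by auto
    hence "card J - card (N J) \<le> d" unfolding d_def using finD by simp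
    thus ?thesis by linarith
  qed
  obtain Js where Js: "Js \<subseteq> X" "card Js = card (N Js) + d"
  proof (cases "d = 0")
    case True
    have "N {} = {}" unfolding N_def by simp
    thus ?thesis using that[of "{}"] True by simp
  next
    case False
    have "D \<noteq> {}" unfolding D_def by auto
    hence "d \<in> D" unfolding d_def using finD Max_in by blast
    then obtain J where "J \<subseteq> X" "d = card J - card (N J)" unfolding D_def by auto
    thus ?thesis using that[of J] False by simp
  qed
  have finA: "\<forall>i\<in>X. finite (A i)" using fin unfolding A_def by auto
  obtain J0 r where J0: "J0 \<subseteq> X" "card X \<le> card J0 + d" "inj_on r J0" "\<forall>i\<in>J0. r i \<in> A i"
    using hall_defect[OF finX finA, of d] dge unfolding N_def by blast
  define f where "f x = (if x \<in> J0 then r x else x)" for x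
  define I where "I = Js \<union> (Y - N Js)"
  have IS: "I \<subseteq> S" unfolding I_def using Js(1) unfolding X_def Y_def by auto
  have Iind: "\<forall>x\<in>I. \<forall>y\<in>I. x\<noteq>y \<longrightarrow> \<not>H x y"
  proof (intro ballI impI)
    fix x y assume xy: "x \<in> I" "y \<in> I" "x \<noteq> y"
    show "\<not> H x y"
    proof
      assume h: "H x y"
      have xS: "x \<in> S" "y \<in> S" using xy IS by auto
      consider "x \<in> Js" "y \<in> Js" | "x \<in> Js" "y \<in> Y - N Js" | "x \<in> Y - N Js" "y \<in> Js"
        | "x \<in> Y - N Js" "y \<in> Y - N Js" using xy unfolding I_def by blast
      thus False
      proof cases
        case 1 thus False using bip[OF xS h] Js(1) unfolding X_def by auto
      next
        case 2 thus False using h xS unfolding N_def A_def by auto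
      next
        case 3 thus False using sym[OF h] xS unfolding N_def A_def by auto
      next
        case 4 thus False using bip[OF xS h] unfolding Y_def by auto
      qed
    qed
  qed
  have cI: "card I = card Y + d"
  proof -
    have "card I = card Js + card (Y - N Js)" unfolding I_def
      apply (rule card_Un_disjoint) using Js(1) finX finY finite_subset unfolding X_def Y_def by auto
    also have "card (Y - N Js) = card Y - card (N Js)" using NY[OF Js(1)] finN[OF Js(1)] card_Diff_subset by blast
    also have "card (N Js) \<le> card Y" using NY[OF Js(1)] finY card_mono by blast
    ultimately show ?thesis using Js(2) by linarith
  qed
  have fS: "f ` S \<subseteq> Y \<union> (X - J0)"
  proof
    fix z assume "z \<in> f ` S"
    then obtain x where x: "x \<in> S" "z = f x" by auto
    show "z \<in> Y \<union> (X - J0)"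
    proof (cases "x \<in> J0")
      case True
      hence "r x \<in> A x" "c x" using J0 unfolding X_def by auto
      thus ?thesis using x True bip unfolding f_def A_def Y_def by auto
    next
      case False thus ?thesis using x unfolding f_def X_def Y_def by auto
    qed
  qed
  have "card (f ` S) \<le> card (Y \<union> (X - J0))" using fS finX finY by (simp add: card_mono)
  also have "\<dots> \<le> card Y + card (X - J0)" by (rule card_Un_le)
  also have "card (X - J0) = card X - card J0" using J0(1) finX card_Diff_subset finite_subset by metis
  finally have cf: "card (f ` S) \<le> card I" using cI J0(2) by linarith
  have fcol: "\<forall>x\<in>S. \<forall>y\<in>S. x\<noteq>y \<longrightarrow> f x = f y \<longrightarrow> H x y"
  proof (intro ballI impI)
    fix x y assume xy: "x \<in> S" "y \<in> S" "x \<noteq> y" "f x = f y"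
    show "H x y"
    proof (cases "x \<in> J0"; cases "y \<in> J0")
      assume "x \<in> J0" "y \<in> J0" thus ?thesis using xy J0(3) unfolding f_def inj_on_def by auto
    next
      assume "x \<notin> J0" "y \<notin> J0" thus ?thesis using xy unfolding f_def by auto
    next
      assume a: "x \<in> J0" "y \<notin> J0"
      hence "r x = y" using xy unfolding f_def by auto
      thus ?thesis using J0(4) a unfolding A_def by auto
    next
      assume a: "x \<notin> J0" "y \<in> J0"
      hence "r y = x" using xy unfolding f_def by auto
      thus ?thesis using J0(4) a sym unfolding A_def by auto
    qed
  qed
  show ?thesis using IS Iind cf fcol by blast
qed



definition dd :: "nat \<Rightarrow> nat \<Rightarrow> nat" where "dd x y = (if x \<le> y then y - x else x - y)"

lemma greedy:
  fixes S :: "nat set" and g :: nat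
  assumes "finite S" "g > 0"
  shows "\<exists>I (f :: nat \<Rightarrow> nat). I \<subseteq> S \<and> (\<forall>x\<in>I. \<forall>y\<in>I. x\<noteq>y \<longrightarrow> dd x y \<notin> {g, 2*g}) \<and> card (f`S) \<le> card I
     \<and> (\<forall>x\<in>S. \<forall>y\<in>S. x\<noteq>y \<longrightarrow> f x = f y \<longrightarrow> dd x y \<in> {g, 2*g})"
  using assms(1)
proof (induction "card S" arbitrary: S rule: less_induct)
  case less
  show ?case
  proof (cases "S = {}")
    case True thus ?thesis by (intro exI[of _ "{}"]) auto
  next
    case False
    define m where "m = Min S"
    have mS: "m \<in> S" and mle: "\<forall>y\<in>S. m \<le> y" using False less.prems unfolding m_def by auto
    define C where "C = {y\<in>S. y = m \<or> y = m + g \<or> y = m + 2*g}"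
    define S' where "S' = S - C"
    have fS': "finite S'" using less.prems unfolding S'_def by auto
    have "card S' < card S" unfolding S'_def
    proof (rule psubset_card_mono[OF less.prems])
      have "m \<in> C" using mS unfolding C_def by auto
      thus "S - C \<subset> S" using mS by blast
    qed
    then obtain I' and f' :: "nat \<Rightarrow> nat" where IH: "I' \<subseteq> S'" "\<forall>x\<in>I'. \<forall>y\<in>I'. x\<noteq>y \<longrightarrow> dd x y \<notin> {g, 2*g}"
      "card (f'`S') \<le> card I'" "\<forall>x\<in>S'. \<forall>y\<in>S'. x\<noteq>y \<longrightarrow> f' x = f' y \<longrightarrow> dd x y \<in> {g, 2*g}"
      using less.hyps[OF _ fS'] by blast
    define I where "I = insert m I'"
    define f where "f y = (if y \<in> C then 0 else Suc (f' y))" for y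
    have mI': "m \<notin> I'" using IH(1) mS unfolding S'_def C_def by auto
    have fI: "finite I'" using IH(1) fS' finite_subset by blast
    have cI: "card I = Suc (card I')" unfolding I_def using mI' fI by simp
    have "f ` S \<subseteq> insert 0 (Suc ` f' ` S')" unfolding f_def S'_def by auto
    hence "card (f ` S) \<le> card (insert 0 (Suc ` f' ` S'))" by (rule card_mono[rotated]) (use fS' in simp)
    also have "\<dots> \<le> Suc (card (f' ` S'))" using fS' by (simp add: card_insert_if card_image)
    finally have c1: "card (f ` S) \<le> card I" using IH(3) cI by linarith
    have i1: "\<forall>x\<in>I. \<forall>y\<in>I. x\<noteq>y \<longrightarrow> dd x y \<notin> {g, 2*g}"
    proof (intro ballI impI)
      fix x y assume xy: "x \<in> I" "y \<in> I" "x \<noteq> y"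
      have md: "dd m z \<notin> {g, 2*g}" "dd z m \<notin> {g, 2*g}" if "z \<in> I'" for z
      proof -
        have "z \<in> S" "z \<notin> C" using that IH(1) unfolding S'_def by auto
        hence "z \<ge> m" "z \<noteq> m + g" "z \<noteq> m + 2*g" using mle unfolding C_def by auto
        thus "dd m z \<notin> {g, 2*g}" "dd z m \<notin> {g, 2*g}" unfolding dd_def by auto
      qed
      consider "x = m" "y \<in> I'" | "y = m" "x \<in> I'" | "x \<in> I'" "y \<in> I'"
        using xy unfolding I_def by blast
      thus "dd x y \<notin> {g, 2*g}"
      proof cases
        case 1 thus ?thesis using md(1) by blast
      next
        case 2 thus ?thesis using md(2) by blast
      next
        case 3 thus ?thesis using IH(2) xy(3) by blast
      qed
    qed
    have f1: "\<forall>x\<in>S. \<forall>y\<in>S. x\<noteq>y \<longrightarrow> f x = f y \<longrightarrow> dd x y \<in> {g, 2*g}"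
    proof (intro ballI impI)
      fix x y assume xy: "x \<in> S" "y \<in> S" "x \<noteq> y" "f x = f y"
      show "dd x y \<in> {g, 2*g}"
      proof (cases "x \<in> C")
        case True
        hence "y \<in> C" using xy unfolding f_def by (auto split: if_splits)
        thus ?thesis using True xy(3) unfolding C_def dd_def by auto
      next
        case False
        hence "y \<notin> C" using xy unfolding f_def by (auto split: if_splits)
        thus ?thesis using False xy IH(4) unfolding f_def S'_def by auto
      qed
    qed
    have "I \<subseteq> S" using IH(1) mS unfolding I_def S'_def by auto
    thus ?thesis using c1 i1 f1 by blast
  qed
qed



lemma adjE:
  assumes "x \<in> {1..n}" "y \<in> {1..n}"
  shows "toeplitz_adj n ({1..n-1} - {s1, s2}) x y \<longleftrightarrow> x \<noteq> y \<and> dd x y \<notin> {s1, s2}"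
  using assms unfolding toeplitz_adj_def dd_def by auto

lemma dd_sym: "dd x y = dd y x" unfolding dd_def by auto

lemma class_le2:
  fixes V :: "nat set"
  assumes fin: "finite V" and V: "\<forall>x\<in>V. \<forall>y\<in>V. x\<noteq>y \<longrightarrow> dd x y \<in> {s1, s2}"
    and s: "0 < s1" "s1 < s2" "s2 \<noteq> 2*s1"
  shows "card V \<le> 2"
proof (cases "V = {}")
  case True thus ?thesis by simp
next
  case False
  define m where "m = Min V"
  have mV: "m \<in> V" and mle: "\<forall>y\<in>V. m \<le> y" using False fin unfolding m_def by auto
  have sub: "V \<subseteq> {m, m+s1, m+s2}"
  proof
    fix y assume y: "y \<in> V"
    show "y \<in> {m, m+s1, m+s2}"
    proof (cases "y = m")
      case False
      hence "dd m y \<in> {s1,s2}" using V y mV by auto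
      thus ?thesis using mle y unfolding dd_def by auto
    qed simp
  qed
  have "\<not> (m+s1 \<in> V \<and> m+s2 \<in> V)"
  proof
    assume "m+s1 \<in> V \<and> m+s2 \<in> V"
    hence "dd (m+s1) (m+s2) \<in> {s1,s2}" using V s by auto
    thus False using s unfolding dd_def by auto
  qed
  hence "V \<subseteq> {m, m+s1} \<or> V \<subseteq> {m, m+s2}" using sub by blast
  moreover have "card {m, m+s1} \<le> 2" "card {m, m+s2} \<le> 2" by (simp_all add: card_insert_if)
  ultimately show ?thesis by (meson card_mono finite.emptyI finite.insertI order_trans)
qed



lemma par_shift:
  fixes x a g :: nat
  assumes "g > 0" "odd a"
  shows "even ((x + a*g) div g) \<noteq> even (x div g)"
proof -
  have "(x + a*g) div g = x div g + a" using assms(1) by simp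
  thus ?thesis using assms(2) by auto
qed

lemma ratio_facts:
  fixes s1 s2 :: nat
  assumes "1 \<le> s1" "s1 < s2"
  defines "g \<equiv> gcd s1 s2"
  shows "g > 0" "s1 = (s1 div g) * g" "s2 = (s2 div g) * g"
    "(s1 + s2) div g = s1 div g + s2 div g" "s1 div g < s2 div g" "coprime (s1 div g) (s2 div g)"
proof -
  show g0: "g > 0" unfolding g_def using assms by simp
  show e1: "s1 = (s1 div g) * g" unfolding g_def by simp
  show e2: "s2 = (s2 div g) * g" unfolding g_def by simp
  show "(s1 + s2) div g = s1 div g + s2 div g" unfolding g_def by (simp add: div_add)
  show "s1 div g < s2 div g" using e1 e2 assms(2) g0 by (metis mult_less_cancel2)
  show "coprime (s1 div g) (s2 div g)" unfolding g_def using assms by (intro div_gcd_coprime) auto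
qed

lemma perfect_dir:
  fixes n s1 s2 :: nat
  assumes s: "1 \<le> s1" "s1 < s2"
    and q: "even ((s1 + s2) div gcd s1 s2) \<or> (s1 + s2) div gcd s1 s2 = 3"
  shows "perfect (toeplitz_adj n ({1..n-1} - {s1, s2})) {1..n}"
  unfolding perfect_def
proof (intro allI impI)
  fix S assume Sn: "S \<subseteq> {1..n}"
  have finS: "finite S" using Sn finite_subset by blast
  define H where "H x y \<longleftrightarrow> dd x y \<in> {s1, s2}" for x y
  have EH: "\<And>x y. x\<in>S \<Longrightarrow> y\<in>S \<Longrightarrow> toeplitz_adj n ({1..n-1} - {s1, s2}) x y \<longleftrightarrow> x \<noteq> y \<and> \<not> H x y"
    using Sn adjE unfolding H_def by blast
  define g where "g = gcd s1 s2"
  define a where "a = s1 div g"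
  define b where "b = s2 div g"
  have g0: "g > 0" and e1: "s1 = a*g" and e2: "s2 = b*g" and qab: "(s1+s2) div gcd s1 s2 = a + b"
    and ab: "a < b" and cop: "coprime a b"
    using ratio_facts[OF s] unfolding g_def a_def b_def by auto
  obtain I and f :: "nat \<Rightarrow> nat" where I: "I \<subseteq> S" "\<forall>x\<in>I. \<forall>y\<in>I. x\<noteq>y \<longrightarrow> \<not> H x y"
    "card (f`S) \<le> card I" "\<forall>x\<in>S. \<forall>y\<in>S. x\<noteq>y \<longrightarrow> f x = f y \<longrightarrow> H x y"
  proof (cases "(s1 + s2) div gcd s1 s2 = 3")
    case True
    have "a \<ge> 1" using e1 s(1) by (cases a) auto
    hence "a = 1" "b = 2" using True qab ab by auto
    hence "s2 = 2*s1" using e1 e2 by simp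
    hence HH: "H x y \<longleftrightarrow> dd x y \<in> {s1, 2*s1}" for x y unfolding H_def by simp
    show ?thesis using greedy[OF finS, of s1] s(1) that unfolding HH by auto
  next
    case False
    hence ev: "even (a + b)" using q qab by auto
    have "\<not> (2 dvd a \<and> 2 dvd b)" using coprime_common_divisor[OF cop, of 2] by auto
    hence oa: "odd a" and ob: "odd b" using ev by auto
    define c where "c x = even (x div g)" for x
    have bip: "c x \<noteq> c y" if "H x y" for x y
    proof -
      have k: "c (x + k*g) \<noteq> c x" if "odd k" for x k
        unfolding c_def using par_shift[OF g0 that] .
      have "dd x y \<in> {a*g, b*g}" using \<open>H x y\<close> e1 e2 unfolding H_def by simp
      hence "y = x + a*g \<or> y = x + b*g \<or> x = y + a*g \<or> x = y + b*g" unfolding dd_def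
        by (cases "x \<le> y") auto
      thus ?thesis using k[OF oa, of x] k[OF ob, of x] k[OF oa, of y] k[OF ob, of y] by auto
    qed
    have sym: "H x y \<Longrightarrow> H y x" for x y unfolding H_def using dd_sym by metis
    show ?thesis using bip_cover[OF finS, of H c] bip sym that by blast
  qed
  show "clique_number (toeplitz_adj n ({1..n-1} - {s1, s2})) S = chromatic_number (toeplitz_adj n ({1..n-1} - {s1, s2})) S"
    by (rule main_generic[OF finS EH I(1) _ I(3)]) (use I in auto)
qed



lemma clique_number_attained:
  assumes "finite S"
  shows "\<exists>C. is_clique E S C \<and> clique_number E S = card C"
proof -
  let ?Cs = "{card C | C. is_clique E S C}"
  have fCs: "finite ?Cs"
  proof (rule finite_subset)
    show "?Cs \<subseteq> {..card S}" using assms by (auto simp: is_clique_def intro: card_mono)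
  qed auto
  have "is_clique E S {}" unfolding is_clique_def by auto
  hence ne: "?Cs \<noteq> {}" by blast
  have "clique_number E S \<in> ?Cs" unfolding clique_number_def using fCs ne Max_in by blast
  thus ?thesis by auto
qed

lemma imperfect_dir:
  fixes n s1 s2 :: nat
  assumes s: "1 \<le> s1" "s1 < s2" "s1 + s2 \<le> n"
    and q: "odd ((s1 + s2) div gcd s1 s2)" "(s1 + s2) div gcd s1 s2 \<noteq> 3"
  shows "\<not> perfect (toeplitz_adj n ({1..n-1} - {s1, s2})) {1..n}"
proof
  assume perf: "perfect (toeplitz_adj n ({1..n-1} - {s1, s2})) {1..n}"
  define E where "E = toeplitz_adj n ({1..n-1} - {s1, s2})"
  define g where "g = gcd s1 s2"
  define a where "a = s1 div g"
  define b where "b = s2 div g"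
  define q where "q = a + b"
  have g0: "g > 0" and e1: "s1 = a*g" and e2: "s2 = b*g" and qab: "(s1+s2) div gcd s1 s2 = q"
    and ab: "a < b"
    using ratio_facts[OF s(1,2)] unfolding g_def a_def b_def q_def by auto
  have a0: "a > 0" using e1 s(1) by (cases a) auto
  have oq: "odd q" using q qab by simp
  have s21: "s2 \<noteq> 2*s1"
  proof
    assume "s2 = 2*s1"
    hence "(s1 + s2) div gcd s1 s2 = 3" using s(1) by simp
    thus False using q(2) by simp
  qed
  define p where "p k = 1 + k*g" for k
  define S where "S = p ` {..<q}"
  have pinj: "inj p" unfolding p_def inj_def using g0 by auto
  have qg: "q*g = s1 + s2" using e1 e2 unfolding q_def by (simp add: algebra_simps)
  have Sn: "S \<subseteq> {1..n}"
  proof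
    fix z assume "z \<in> S"
    then obtain k where k: "k < q" "z = p k" unfolding S_def by auto
    have "Suc k \<le> q" using k by simp
    hence "Suc k * g \<le> q * g" by (rule mult_right_mono) simp
    hence "k*g + g \<le> n" using qg s(3) by simp
    thus "z \<in> {1..n}" using k g0 unfolding p_def by auto
  qed
  have finS: "finite S" unfolding S_def by simp
  have cS: "card S = q" unfolding S_def using pinj by (simp add: card_image inj_on_subset)
  have EH: "\<And>x y. x\<in>S \<Longrightarrow> y\<in>S \<Longrightarrow> E x y \<longleftrightarrow> x \<noteq> y \<and> dd x y \<notin> {s1, s2}"
    using Sn adjE unfolding E_def by blast
  obtain C where C: "is_clique E S C" "clique_number E S = card C"
    using clique_number_attained[OF finS] by blast
  define K where "K = {k\<in>{..<q}. p k \<in> C}"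
  have CK: "C = p ` K" using C(1) unfolding K_def is_clique_def S_def by auto
  have cCK: "card C = card K" unfolding CK using pinj by (simp add: card_image inj_on_subset)
  define \<sigma> where "\<sigma> k = (if k < b then k + a else k - b)" for k
  have \<sigma>q: "\<sigma> k < q" if "k < q" for k using that unfolding \<sigma>_def q_def by auto
  have \<sigma>inj: "inj_on \<sigma> {..<q}" unfolding inj_on_def \<sigma>_def q_def by auto
  have \<sigma>K: "\<sigma> k \<notin> K" if "k \<in> K" for k
  proof
    assume sk: "\<sigma> k \<in> K"
    have kq: "k < q" using that unfolding K_def by auto
    have "dd (p k) (p (\<sigma> k)) \<in> {a*g, b*g}"
    proof (cases "k < b")
      case True thus ?thesis unfolding \<sigma>_def dd_def p_def by (simp add: algebra_simps)
    next
      case False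
      hence "k*g = (k - b)*g + b*g" by (simp add: algebra_simps flip: add_mult_distrib)
      thus ?thesis using False unfolding \<sigma>_def dd_def p_def by auto
    qed
    hence d: "dd (p k) (p (\<sigma> k)) \<in> {s1, s2}" using e1 e2 by simp
    have ne: "p k \<noteq> p (\<sigma> k)"
    proof
      assume "p k = p (\<sigma> k)"
      hence "dd (p k) (p (\<sigma> k)) = 0" unfolding dd_def by simp
      thus False using d s by auto
    qed
    have mem: "p k \<in> C" "p (\<sigma> k) \<in> C" using that sk unfolding K_def by auto
    hence "E (p k) (p (\<sigma> k))" using C(1) ne unfolding is_clique_def by blast
    moreover have "p k \<in> S" "p (\<sigma> k) \<in> S" using mem C(1) unfolding is_clique_def by auto
    ultimately show False using EH d by blast
  qed
  have Kq: "K \<subseteq> {..<q}" unfolding K_def by auto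
  have "card (K \<union> \<sigma> ` K) \<le> card {..<q}"
    apply (rule card_mono) using Kq \<sigma>q by auto
  moreover have "card (K \<union> \<sigma> ` K) = card K + card (\<sigma> ` K)"
  proof (rule card_Un_disjoint)
    show "finite K" using Kq finite_subset by blast
    thus "finite (\<sigma> ` K)" by simp
  qed (use \<sigma>K in auto)
  moreover have "card (\<sigma> ` K) = card K" using \<sigma>inj Kq by (simp add: card_image inj_on_subset)
  ultimately have "2 * card K \<le> q" by simp
  moreover have "2 * card K \<noteq> q" using oq by auto
  ultimately have om: "2 * clique_number E S < q" using C(2) cCK by linarith
  have col0: "colorable E S (card S)"
    apply (rule colorable_of_map[OF finS, of id]) using EH by auto
  define k where "k = chromatic_number E S"
  have "colorable E S k" unfolding k_def chromatic_number_def using col0 by (rule LeastI)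
  then obtain f where f: "\<forall>x\<in>S. f x < k" "\<forall>x\<in>S. \<forall>y\<in>S. E x y \<longrightarrow> f x \<noteq> f y"
    unfolding colorable_def by blast
  have "S \<subseteq> (\<Union>i\<in>{..<k}. {x\<in>S. f x = i})" using f(1) by auto
  hence "card S \<le> card (\<Union>i\<in>{..<k}. {x\<in>S. f x = i})" by (rule card_mono[rotated]) (use finS in auto)
  also have "\<dots> \<le> (\<Sum>i\<in>{..<k}. card {x\<in>S. f x = i})" by (rule card_UN_le) simp
  also have "\<dots> \<le> (\<Sum>i\<in>{..<k}. 2)"
  proof (rule sum_mono)
    fix i assume "i \<in> {..<k}"
    show "card {x\<in>S. f x = i} \<le> 2"
    proof (rule class_le2)
      show "finite {x\<in>S. f x = i}" using finS by auto
      show "\<forall>x\<in>{x\<in>S. f x = i}. \<forall>y\<in>{x\<in>S. f x = i}. x\<noteq>y \<longrightarrow> dd x y \<in> {s1, s2}"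
      proof (intro ballI impI)
        fix x y assume xy: "x \<in> {x\<in>S. f x = i}" "y \<in> {x\<in>S. f x = i}" "x \<noteq> y"
        hence "x \<in> S" "y \<in> S" "f x = f y" by auto
        hence "\<not> E x y" using f(2) by blast
        thus "dd x y \<in> {s1, s2}" using EH[of x y] xy by blast
      qed
    qed (use s s21 in auto)
  qed
  finally have "q \<le> 2 * k" using cS by simp
  moreover have "clique_number E S = k" using perf Sn unfolding perfect_def k_def E_def by blast
  ultimately show False using om by simp
qed

theorem corollary3p9:
  fixes n s1 s2 :: nat
  assumes "n \<ge> 4" and "1 \<le> s1" and "s1 < s2" and "s2 \<le> n - 1" and "s1 + s2 \<le> n"
  shows "perfect (toeplitz_adj n ({1..n-1} - {s1, s2})) {1..n} \<longleftrightarrow>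
         (even ((s1 + s2) div gcd s1 s2) \<or> (s1 + s2) div gcd s1 s2 = 3)"
  using perfect_dir[OF assms(2,3)] imperfect_dir[OF assms(2,3,5)] by blast

end
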